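(* Under the hypotheses of Lemma 7 (with $T=\bigcup_{j\in J}T_j$ a finite or countable disjoint union of second-countable Hausdorff manifolds, $f:T\to\mathbb{R}^l$ continuously differentiable, and $f_n:T\to\mathbb{R}^l$ continuously differentiable injective functions converging to $f$ uniformly on compact sets), every non-invertible value $u$ of $f$ is a critical value of $f$: there exists $t\in T$ with $f(t)=u$ such that the derivative $f'(t)$ has rank less than $l$.
   Context: $u\in\mathbb{R}^l$ is a non-invertible value of $f$ if there exist $t_1\neq t_2$ in $T$ with $f(t_1)=f(t_2)=u$. The rank of $f'(t)$ is the rank of the differential of $f$ at $t$ as a linear map from the tangent space of the relevant manifold $T_j$ into $\mathbb{R}^l$. *)

theory Defs
  imports "HOL-Analysis.Analysis"
begin

text \<open>A manifold of dimension d is modelled on an open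
subset of a d-dimensional linear subspace S of a Euclidean space 'e
(S is a copy of R^d).\<close>

definition is_chart :: "'e::euclidean_space set \<Rightarrow> 'a::topological_space set \<Rightarrow> ('a \<Rightarrow> 'e) \<Rightarrow> bool" where
  "is_chart S U \<phi> \<longleftrightarrow> open U \<and> \<phi> ` U \<subseteq> S \<and> openin (top_of_set S) (\<phi> ` U)
     \<and> inj_on \<phi> U \<and> continuous_on U \<phi> \<and> continuous_on (\<phi> ` U) (inv_into U \<phi>)"

definition C1_on :: "'e::euclidean_space set \<Rightarrow> ('e \<Rightarrow> 'b::real_normed_vector) \<Rightarrow> bool" where
  "C1_on V g \<longleftrightarrow> (\<exists>D :: 'e \<Rightarrow> ('e \<Rightarrow>\<^sub>L 'b). continuous_on V D \<and>
      (\<forall>x\<in>V. (g has_derivative blinfun_apply (D x)) (at x within V)))"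

definition C1_manifold :: "'a::topological_space set \<Rightarrow> 'e::euclidean_space set \<Rightarrow> ('a set \<times> ('a \<Rightarrow> 'e)) set \<Rightarrow> bool" where
  "C1_manifold M S A \<longleftrightarrow> subspace S \<and>
     (\<forall>(U,\<phi>)\<in>A. is_chart S U \<phi> \<and> U \<subseteq> M) \<and>
     (\<forall>t\<in>M. \<exists>(U,\<phi>)\<in>A. t \<in> U) \<and>
     (\<forall>(U,\<phi>)\<in>A. \<forall>(V,\<psi>)\<in>A. C1_on (\<phi> ` (U \<inter> V)) (\<psi> \<circ> inv_into U \<phi>))"

definition C1_map :: "('a::topological_space set \<times> ('a \<Rightarrow> 'e::euclidean_space)) set \<Rightarrow> ('a \<Rightarrow> 'b::real_normed_vector) \<Rightarrow> bool" where
  "C1_map A f \<longleftrightarrow> (\<forall>(U,\<phi>)\<in>A. C1_on (\<phi> ` U) (f \<circ> inv_into U \<phi>))"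

definition rank_lt :: "'e::euclidean_space set \<Rightarrow> ('a::topological_space set \<times> ('a \<Rightarrow> 'e)) set \<Rightarrow> ('a \<Rightarrow> 'b::euclidean_space) \<Rightarrow> 'a \<Rightarrow> nat \<Rightarrow> bool" where
  "rank_lt S A f t l \<longleftrightarrow> (\<exists>(U,\<phi>)\<in>A. t \<in> U \<and> (\<exists>D.
      ((f \<circ> inv_into U \<phi>) has_derivative D) (at (\<phi> t) within \<phi> ` U) \<and> dim (D ` S) < l))"

end

theory Submission
  imports Defs
begin

lemma C1_on_cont:
  assumes "C1_on V g" shows "continuous_on V g"
proof -
  from assms obtain D where "\<forall>x\<in>V. (g has_derivative blinfun_apply (D x)) (at x within V)"
    unfolding C1_on_def by blast
  then show ?thesis unfolding continuous_on_eq_continuous_within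
    using has_derivative_continuous by blast
qed

lemma local_hit:
  fixes U :: "'a::topological_space set" and \<phi> :: "'a \<Rightarrow> 'e::euclidean_space"
    and f :: "'a \<Rightarrow> real ^ 'l" and fn :: "nat \<Rightarrow> 'a \<Rightarrow> real ^ 'l"
    and Dx :: "'e \<Rightarrow> ('e \<Rightarrow>\<^sub>L (real ^ 'l))"
  assumes S: "subspace S" and ch: "is_chart S U \<phi>" and tU: "t \<in> U"
    and W: "open W" "t \<in> W"
    and Dc: "continuous_on (\<phi> ` U) Dx"
    and Dd: "\<And>x. x \<in> \<phi> ` U \<Longrightarrow> ((f \<circ> inv_into U \<phi>) has_derivative blinfun_apply (Dx x)) (at x within \<phi> ` U)"
    and full: "dim (blinfun_apply (Dx (\<phi> t)) ` S) \<ge> CARD('l)"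
    and conv: "\<And>K. compact K \<Longrightarrow> uniform_limit K fn f sequentially"
    and fnc: "\<And>n. continuous_on (\<phi> ` U) (fn n \<circ> inv_into U \<phi>)"
  shows "\<exists>N. \<forall>n\<ge>N. \<exists>x\<in>U \<inter> W. fn n x = f t"
proof -
  define p where "p = \<phi> t"
  define \<psi> where "\<psi> = inv_into U \<phi>"
  define L where "L = blinfun_apply (Dx p)"
  have chU: "open U" "\<phi> ` U \<subseteq> S" "openin (top_of_set S) (\<phi> ` U)" "inj_on \<phi> U"
    "continuous_on U \<phi>" "continuous_on (\<phi> ` U) \<psi>"
    using ch unfolding is_chart_def \<psi>_def by auto
  have pU: "p \<in> \<phi> ` U" using tU p_def by auto
  have \<psi>p: "\<psi> p = t" using tU chU(4) by (simp add: \<psi>_def p_def)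
  have linL: "linear L" unfolding L_def by (simp add: bounded_linear.linear blinfun.bounded_linear_right)
  have sub: "subspace (L ` S)" using S linL by (simp add: linear_subspace_image)
  have "dim (L ` S) = DIM(real^'l)" using full dim_subset_UNIV[of "L ` S"] by (simp add: L_def p_def)
  then have "span (L ` S) = UNIV" by (metis dim_eq_full DIM_cart DIM_real mult_1_right)
  then have surjL: "\<forall>v. \<exists>s\<in>S. L s = v" using sub by (metis UNIV_I image_iff span_eq_iff)
  then have "\<forall>i::'l. \<exists>s\<in>S. L s = axis i 1" by blast
  then obtain s :: "'l \<Rightarrow> 'e" where s: "\<And>i. s i \<in> S" "\<And>i. L (s i) = axis i 1" by metis
  define R where "R = (\<lambda>y::real^'l. \<Sum>i\<in>UNIV. (y$i) *\<^sub>R s i)"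
  have linR: "linear R" unfolding R_def
    by (rule linearI) (auto simp: sum.distrib scaleR_add_left scaleR_sum_right)
  then have blR: "bounded_linear R" by (simp add: linear_conv_bounded_linear)
  have RS: "R y \<in> S" for y unfolding R_def using S s(1)
    by (intro subspace_sum) (auto intro: subspace_scale)
  have LR: "L (R y) = y" for y
  proof -
    have "L (R y) = (\<Sum>i\<in>UNIV. (y$i) *\<^sub>R L (s i))" unfolding R_def
      using linL by (simp add: linear_sum linear_scale)
    also have "\<dots> = y" using s(2) basis_expansion[of y] by (simp add: scalar_mult_eq_scaleR)
    finally show ?thesis .
  qed
  define B where "B = onorm R"
  have B0: "B \<ge> 0" unfolding B_def using blR by (rule onorm_pos_le)
  have RB: "norm (R y) \<le> B * norm y" for y unfolding B_def using blR by (rule onorm)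
  have "openin (top_of_set (\<phi> ` U)) (\<phi> ` U \<inter> \<psi> -` (U \<inter> W))"
    using chU(6) W(1) chU(1)
    by (intro continuous_openin_preimage_gen) auto
  then have "openin (top_of_set S) (\<phi> ` U \<inter> \<psi> -` (U \<inter> W))"
    by (rule openin_trans[OF _ chU(3)])
  then have "\<forall>x\<in>\<phi> ` U \<inter> \<psi> -` (U \<inter> W). \<exists>\<epsilon>>0. ball x \<epsilon> \<inter> S \<subseteq> \<phi> ` U \<inter> \<psi> -` (U \<inter> W)"
    unfolding openin_contains_ball by blast
  moreover have "p \<in> \<phi> ` U \<inter> \<psi> -` (U \<inter> W)" using pU \<psi>p tU W(2) by simp
  ultimately obtain e1 where e1: "e1 > 0" "ball p e1 \<inter> S \<subseteq> \<phi> ` U \<inter> \<psi> -` (U \<inter> W)"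
    by blast
  define \<delta> where "\<delta> = 1 / (2 * (B + 1))"
  have \<delta>0: "\<delta> > 0" using B0 by (simp add: \<delta>_def)
  obtain e2 where e2: "e2 > 0" "\<And>z. z \<in> \<phi> ` U \<Longrightarrow> dist z p < e2 \<Longrightarrow> dist (Dx z) (Dx p) < \<delta>"
    using Dc pU \<delta>0 unfolding continuous_on_iff by metis
  define r where "r = min e1 e2 / (2 * (B + 1))"
  have r0: "r > 0" using e1 e2 B0 by (simp add: r_def)
  have near: "dist (p + R y) p < min e1 e2" if "y \<in> cball 0 r" for y
  proof -
    have "dist (p + R y) p = norm (R y)" by (simp add: dist_norm)
    also have "\<dots> \<le> B * norm y" by (rule RB)
    also have "\<dots> \<le> B * r" using that B0 by (simp add: mult_left_mono)
    also have "\<dots> < min e1 e2"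
    proof -
      have "B * r = min e1 e2 * (B / (2 * (B+1)))" by (simp add: r_def field_simps)
      also have "\<dots> < min e1 e2 * 1" using e1 e2 B0 by (intro mult_strict_left_mono) (auto simp: field_simps)
      finally show ?thesis by simp
    qed
    finally show ?thesis .
  qed
  have inS: "p + R y \<in> S" for y using RS pU chU(2) S by (auto intro: subspace_add)
  have inU: "p + R y \<in> \<phi> ` U" "\<psi> (p + R y) \<in> U \<inter> W" if "y \<in> cball 0 r" for y
    using e1(2) near[OF that] inS[of y] by (auto simp: dist_commute)
  have Dnear: "norm (Dx (p + R y) - Dx p) < \<delta>" if "y \<in> cball 0 r" for y
    using e2(2)[OF inU(1)[OF that]] near[OF that] by (simp add: dist_norm)
  define a where "a = (\<lambda>y. p + R y)"
  have a_cont: "continuous_on (cball 0 r) a" unfolding a_def using blR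
    by (intro continuous_intros) (simp add: linear_continuous_on)
  have a_img: "a ` cball 0 r \<subseteq> \<phi> ` U" using inU(1) by (auto simp: a_def)
  define h where "h = (\<lambda>y. f (\<psi> (a y)))"
  have h0: "h 0 = f t" using \<psi>p linR by (simp add: h_def a_def linear_0)
  have hder: "(h has_derivative (\<lambda>v. Dx (a y) (R v))) (at y within cball 0 r)" if "y \<in> cball 0 r" for y
  proof -
    have "(a has_derivative R) (at y within cball 0 r)" unfolding a_def
      by (rule has_derivative_eq_rhs[OF has_derivative_add[OF has_derivative_const bounded_linear_imp_has_derivative[OF blR]]]) simp
    moreover have "((f \<circ> \<psi>) has_derivative blinfun_apply (Dx (a y))) (at (a y) within a ` cball 0 r)"
      using Dd[of "a y"] inU(1)[OF that] a_img unfolding \<psi>_def a_def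
      by (auto intro: has_derivative_subset)
    ultimately have "((f \<circ> \<psi>) \<circ> a has_derivative blinfun_apply (Dx (a y)) \<circ> R) (at y within cball 0 r)"
      by (rule diff_chain_within)
    then show ?thesis by (simp add: h_def o_def)
  qed
  have kbound: "norm ((y - h y) - (0 - h 0)) \<le> 1/2 * norm (y - 0)" if "y \<in> cball 0 r" for y
  proof (rule differentiable_bound[where f="\<lambda>y. y - h y" and S="cball 0 r"
        and f'="\<lambda>y v. v - Dx (a y) (R v)"])
    show "convex (cball (0::real^'l) r)" by simp
    show "((\<lambda>y. y - h y) has_derivative (\<lambda>v. v - Dx (a y) (R v))) (at y within cball 0 r)"
      if "y \<in> cball 0 r" for y
      using hder[OF that] by (auto intro!: derivative_eq_intros)
    show "onorm (\<lambda>v. v - Dx (a y) (R v)) \<le> 1/2" if "y \<in> cball 0 r" for y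
    proof -
      have eq: "(\<lambda>v. v - Dx (a y) (R v)) = blinfun_apply (Dx p - Dx (a y)) \<circ> R"
        using LR by (auto simp: L_def blinfun.diff_left)
      have "onorm (blinfun_apply (Dx p - Dx (a y)) \<circ> R) \<le> onorm (blinfun_apply (Dx p - Dx (a y))) * onorm R"
        using blR by (intro onorm_compose) (auto simp: blinfun.bounded_linear_right)
      also have "\<dots> = norm (Dx (a y) - Dx p) * B"
        by (simp add: B_def norm_blinfun.rep_eq[symmetric] norm_minus_commute)
      also have "\<dots> \<le> \<delta> * B" using Dnear[OF that] B0 by (intro mult_right_mono) (auto simp: a_def)
      also have "\<dots> \<le> 1/2" using B0 by (simp add: \<delta>_def field_simps)
      finally show ?thesis using eq by simp
    qed
    show "y \<in> cball 0 r" by fact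
    show "0 \<in> cball (0::real^'l) r" using r0 by simp
  qed
  define K where "K = (\<psi> \<circ> a) ` cball 0 r"
  have \<psi>a_cont: "continuous_on (cball 0 r) (\<psi> \<circ> a)"
    by (rule continuous_on_compose[OF a_cont continuous_on_subset[OF chU(6) a_img]])
  have "compact K" unfolding K_def using \<psi>a_cont by (intro compact_continuous_image) auto
  then have "uniform_limit K fn f sequentially" by (rule conv)
  then obtain N where N: "\<And>n x. n \<ge> N \<Longrightarrow> x \<in> K \<Longrightarrow> dist (fn n x) (f x) < r/2"
    using r0 unfolding uniform_limit_sequentially_iff by (metis half_gt_zero)
  show ?thesis
  proof (intro exI allI impI)
    fix n assume n: "n \<ge> N"
    define g where "g = (\<lambda>y. fn n (\<psi> (a y)))"
    have gc: "continuous_on (cball 0 r) g"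
    proof -
      have "continuous_on (cball 0 r) ((fn n \<circ> \<psi>) \<circ> a)"
        unfolding \<psi>_def by (rule continuous_on_compose[OF a_cont continuous_on_subset[OF fnc[of n] a_img]])
      then show ?thesis by (simp add: g_def o_def)
    qed
    define F where "F = (\<lambda>y. y - (g y - f t))"
    have "\<exists>y\<in>cball 0 r. F y = y"
    proof (rule brouwer_ball[OF r0])
      show "continuous_on (cball 0 r) F" unfolding F_def using gc by (intro continuous_intros)
      show "F \<in> cball 0 r \<rightarrow> cball 0 r"
      proof
        fix y :: "real^'l" assume y: "y \<in> cball 0 r"
        have gh: "norm (g y - h y) < r/2"
          using N[OF n, of "\<psi> (a y)"] y by (auto simp: K_def g_def h_def dist_norm)
        have "F y = ((y - h y) - (0 - h 0)) - (g y - h y)" by (simp add: F_def h0)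
        then have "norm (F y) \<le> norm ((y - h y) - (0 - h 0)) + norm (g y - h y)"
          by (metis norm_triangle_ineq4)
        also have "\<dots> \<le> 1/2 * norm y + r/2" using kbound[OF y] gh by simp
        also have "\<dots> \<le> r" using y by simp
        finally show "F y \<in> cball 0 r" by simp
      qed
    qed blast
    then obtain y where y: "y \<in> cball 0 r" "F y = y" by blast
    then have "g y = f t" by (simp add: F_def)
    then show "\<exists>x\<in>U \<inter> W. fn n x = f t" using inU(2)[OF y(1)] by (auto simp: g_def a_def)
  qed
qed

theorem mainTheorem13:
  fixes J :: "'j set"
    and T :: "'j \<Rightarrow> 'a::{t2_space, second_countable_topology} set"
    and S :: "'j \<Rightarrow> 'e::euclidean_space set"
    and A :: "'j \<Rightarrow> ('a set \<times> ('a \<Rightarrow> 'e)) set"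
    and f :: "'a \<Rightarrow> real ^ 'l"
    and fn :: "nat \<Rightarrow> 'a \<Rightarrow> real ^ 'l"
    and u :: "real ^ 'l"
  assumes J_countable: "countable J"
    and T_open: "\<And>j. j \<in> J \<Longrightarrow> open (T j)"
    and T_disjoint: "\<And>i j. i \<in> J \<Longrightarrow> j \<in> J \<Longrightarrow> i \<noteq> j \<Longrightarrow> T i \<inter> T j = {}"
    and T_cover: "(\<Union>j\<in>J. T j) = UNIV"
    and T_manifold: "\<And>j. j \<in> J \<Longrightarrow> C1_manifold (T j) (S j) (A j)"
    and f_C1: "\<And>j. j \<in> J \<Longrightarrow> C1_map (A j) f"
    and fn_C1: "\<And>n j. j \<in> J \<Longrightarrow> C1_map (A j) (fn n)"
    and fn_inj: "\<And>n. inj (fn n)"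
    and fn_conv: "\<And>K. compact K \<Longrightarrow> uniform_limit K fn f sequentially"
    and u_noninv: "\<exists>t1 t2. t1 \<noteq> t2 \<and> f t1 = u \<and> f t2 = u"
  shows "\<exists>t. f t = u \<and> (\<exists>j\<in>J. t \<in> T j \<and> rank_lt (S j) (A j) f t CARD('l))"
  proof (rule ccontr)
  assume neg: "\<not> ?thesis"
  obtain t1 t2 where t12: "t1 \<noteq> t2" "f t1 = u" "f t2 = u" using u_noninv by blast
  obtain W1 W2 where W: "open W1" "open W2" "t1 \<in> W1" "t2 \<in> W2" "W1 \<inter> W2 = {}"
    using hausdorff[OF t12(1)] by blast
  have key: "\<exists>N. \<forall>n\<ge>N. \<exists>x\<in>W. fn n x = u" if tu: "f t = u" and Wo: "open W" "t \<in> W" for t W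
  proof -
    obtain j where j: "j \<in> J" "t \<in> T j" using T_cover by blast
    have man: "C1_manifold (T j) (S j) (A j)" using T_manifold[OF j(1)] .
    then have Ssub: "subspace (S j)" unfolding C1_manifold_def by blast
    from man j(2) obtain U \<phi> where Uphi: "(U, \<phi>) \<in> A j" "t \<in> U"
      unfolding C1_manifold_def by blast
    have ch: "is_chart (S j) U \<phi>" using man Uphi(1) unfolding C1_manifold_def by blast
    have "C1_on (\<phi> ` U) (f \<circ> inv_into U \<phi>)" using f_C1[OF j(1)] Uphi(1)
      unfolding C1_map_def by blast
    then obtain Dx :: "'e \<Rightarrow> ('e \<Rightarrow>\<^sub>L (real ^ 'l))" where
      Dx: "continuous_on (\<phi> ` U) Dx"
        "\<And>x. x \<in> \<phi> ` U \<Longrightarrow> ((f \<circ> inv_into U \<phi>) has_derivative blinfun_apply (Dx x)) (at x within \<phi> ` U)"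
      unfolding C1_on_def by blast
    have "\<not> rank_lt (S j) (A j) f t CARD('l)" using neg tu j by blast
    then have full: "dim (blinfun_apply (Dx (\<phi> t)) ` S j) \<ge> CARD('l)"
      using Uphi Dx(2)[of "\<phi> t"] unfolding rank_lt_def by fastforce
    have fnc: "continuous_on (\<phi> ` U) (fn n \<circ> inv_into U \<phi>)" for n
    proof -
      have "C1_on (\<phi> ` U) (fn n \<circ> inv_into U \<phi>)" using fn_C1[OF j(1)] Uphi(1)
        unfolding C1_map_def by blast
      then show ?thesis by (rule C1_on_cont)
    qed
    from local_hit[OF Ssub ch Uphi(2) Wo Dx full fn_conv fnc] tu show ?thesis by blast
  qed
  obtain N1 where N1: "\<And>n. n \<ge> N1 \<Longrightarrow> \<exists>x\<in>W1. fn n x = u" using key[OF t12(2) W(1,3)] by blast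
  obtain N2 where N2: "\<And>n. n \<ge> N2 \<Longrightarrow> \<exists>x\<in>W2. fn n x = u" using key[OF t12(3) W(2,4)] by blast
  obtain x1 where x1: "x1 \<in> W1" "fn (max N1 N2) x1 = u" using N1[of "max N1 N2"] by auto
  obtain x2 where x2: "x2 \<in> W2" "fn (max N1 N2) x2 = u" using N2[of "max N1 N2"] by auto
  have "x1 = x2" using fn_inj[of "max N1 N2"] x1(2) x2(2) by (simp add: inj_def)
  then show False using x1(1) x2(1) W(5) by blast
qed

end
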